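(* Let $n\ge 1$ and for $R>0$ let $P_n(R)$ be the set of monic degree-$n$ polynomials with integer coefficients having a real root $\lambda>1$ with all other roots strictly smaller than $\lambda$ in absolute value, and all of whose roots have absolute value at most $R$. Then $|P_n(R)|\sim R^{n(n+1)/2}$.
   Context: For positive functions $f,g$, $f\sim g$ means there is a constant $C>0$ such that $\frac1C f(R)\le g(R)\le C f(R)$ for all sufficiently large $R$. $|A|$ denotes the cardinality of a finite set $A$. *)

theory Defs
  imports "HOL-Computational_Algebra.Polynomial" Complex_Main
begin

definition perron_polys :: "nat \<Rightarrow> real \<Rightarrow> int poly set" where
  "perron_polys n R = {p. degree p = n \<and> lead_coeff p = 1 \<and>
     (\<exists>l::real. l > 1 \<and> poly (map_poly of_int p) (complex_of_real l) = 0 \<and>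
        (\<forall>z. poly (map_poly of_int p) z = 0 \<and> z \<noteq> complex_of_real l \<longrightarrow> cmod z < l)) \<and>
     (\<forall>z. poly (map_poly of_int p) z = (0::complex) \<longrightarrow> cmod z \<le> R)}"

end

theory Submission imports Defs "HOL-Computational_Algebra.Fundamental_Theorem_Algebra" "HOL-Library.FuncSet"
begin

lemma coeff_bound:
  fixes P :: "complex poly" and R :: real
  assumes "degree P = d" "lead_coeff P = 1" "R \<ge> 0" "\<forall>z. poly P z = 0 \<longrightarrow> cmod z \<le> R"
  shows "cmod (coeff P k) \<le> real (d choose k) * R^(d-k)"
  using assms
proof (induction d arbitrary: P k)
  case 0
  then have "P = [:1:]" by (metis degree0_coeffs coeff_pCons_0)
  then show ?case by (cases k) auto
next
  case (Suc d)
  obtain z where z: "poly P z = 0" using alg_closed_imp_poly_has_root[of P] Suc.prems by auto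
  then obtain Q where PQ: "P = [:-z,1:] * Q" using poly_eq_0_iff_dvd by blast
  have Q0: "Q \<noteq> 0" using PQ Suc.prems by auto
  have dm: "degree ([:-z,1:]*Q) = 1 + degree Q" by (subst degree_mult_eq) (use Q0 in auto)
  have dQ: "degree Q = d" using PQ Suc.prems dm by simp
  have "lead_coeff ([:-z,1:]*Q) = lead_coeff Q" by (subst lead_coeff_mult) auto
  then have lQ: "lead_coeff Q = 1" using PQ Suc.prems by simp
  have rQ: "\<forall>w. poly Q w = 0 \<longrightarrow> cmod w \<le> R" using PQ Suc.prems by auto
  have IH: "\<And>j. cmod (coeff Q j) \<le> real (d choose j) * R^(d-j)"
    using Suc.IH[OF dQ lQ Suc.prems(3) rQ] .
  have zR: "cmod z \<le> R" using z Suc.prems by auto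
  have cP: "coeff P k = - z * coeff Q k + (case k of 0 \<Rightarrow> 0 | Suc j \<Rightarrow> coeff Q j)"
    using PQ by (simp add: coeff_pCons split: nat.splits)
  show ?case
  proof (cases k)
    case 0
    have "cmod (coeff P k) = cmod z * cmod (coeff Q 0)" using cP 0 by (simp add: norm_mult)
    also have "\<dots> \<le> R * R^d" using IH[of 0] zR Suc.prems(3) by (intro mult_mono) auto
    finally show ?thesis using 0 by simp
  next
    case (Suc j)
    have "cmod (coeff P k) \<le> cmod z * cmod (coeff Q k) + cmod (coeff Q j)"
      using cP Suc by (metis norm_triangle_ineq norm_minus_cancel norm_mult old.nat.simps(5) order_trans order_refl)
    also have "\<dots> \<le> R * (real (d choose k) * R^(d-k)) + real (d choose j) * R^(d-j)"
      using IH[of k] IH[of j] zR Suc.prems(3) by (intro add_mono mult_mono) auto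
    also have "R * (real (d choose k) * R^(d-k)) \<le> real (d choose k) * R^(d-j)"
    proof (cases "k \<le> d")
      case True
      then have "R * R^(d-k) = R^(d-j)" using Suc by (metis Suc_diff_le diff_Suc_Suc power_Suc)
      then show ?thesis by (metis mult.left_commute order_refl)
    next
      case False then show ?thesis by (simp add: binomial_eq_0)
    qed
    finally show ?thesis using Suc by (simp add: algebra_simps)
  qed
qed

lemma deg_of_int_poly [simp]:
  "degree (map_poly (of_int :: int \<Rightarrow> 'a::{ring_char_0,ring_1}) p) = degree p"
  by (rule degree_map_poly) auto

lemma coeff_of_int_poly [simp]:
  "coeff (map_poly (of_int :: int \<Rightarrow> 'a::ring_1) p) k = of_int (coeff p k)"
  by (rule coeff_map_poly) auto

lemma sum_diff_gauss: "(\<Sum>k\<le>n. n - k) = n * (n + 1) div (2::nat)"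
proof -
  have "(\<Sum>k\<le>n. n - k) = (\<Sum>k\<le>n. k)"
    by (rule sum.reindex_bij_witness[of _ "\<lambda>k. n - k" "\<lambda>k. n - k"]) (auto simp: diff_diff_cancel)
  also have "\<dots> = n * (n + 1) div 2" by (metis gauss_sum_nat atMost_atLeast0 Suc_eq_plus1)
  finally show ?thesis .
qed

lemma upper:
  fixes n :: nat and R :: real
  assumes R: "R \<ge> 1"
  shows "finite (perron_polys n R) \<and>
    real (card (perron_polys n R)) \<le> (3 * 2^n)^(n+1) * R ^ (n * (n + 1) div 2)"
proof -
  define B where "B k = real (n choose k) * R^(n-k)" for k
  define T where "T = PiE {..n} (\<lambda>k. {-\<lfloor>B k\<rfloor>..\<lfloor>B k\<rfloor>})"
  define f where "f p = restrict (coeff p) {..n}" for p :: "int poly"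
  have fin: "finite T" unfolding T_def by (intro finite_PiE) auto
  have bnd: "\<bar>coeff p k\<bar> \<le> B k" if "p \<in> perron_polys n R" for p k
  proof -
    let ?P = "map_poly (of_int :: int \<Rightarrow> complex) p"
    have "cmod (coeff ?P k) \<le> B k" unfolding B_def
      by (rule coeff_bound) (use that R in \<open>auto simp: perron_polys_def\<close>)
    then show ?thesis by simp
  qed
  have sub: "f ` perron_polys n R \<subseteq> T"
  proof
    fix x assume "x \<in> f ` perron_polys n R"
    then obtain p where p: "p \<in> perron_polys n R" "x = f p" by auto
    have "-\<lfloor>B k\<rfloor> \<le> coeff p k \<and> coeff p k \<le> \<lfloor>B k\<rfloor>" for k
      using bnd[OF p(1), of k] by (simp add: le_floor_iff abs_le_iff floor_le_iff) linarith
    then show "x \<in> T" unfolding T_def p(2) f_def by auto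
  qed
  have inj: "inj_on f (perron_polys n R)"
  proof
    fix p q assume p: "p \<in> perron_polys n R" and q: "q \<in> perron_polys n R" and e: "f p = f q"
    show "p = q"
    proof (rule poly_eqI)
      fix k
      show "coeff p k = coeff q k"
      proof (cases "k \<le> n")
        case True then show ?thesis using fun_cong[OF e, of k] by (simp add: f_def)
      next
        case False then show ?thesis using p q by (simp add: perron_polys_def coeff_eq_0)
      qed
    qed
  qed
  have finP: "finite (perron_polys n R)"
    using inj sub fin by (meson finite_imageD finite_subset)
  have "card (perron_polys n R) \<le> card T" using card_inj_on_le[OF inj sub fin] .
  also have "card T = (\<Prod>k\<le>n. nat (2 * \<lfloor>B k\<rfloor> + 1))" unfolding T_def
    by (subst card_PiE) auto
  finally have "real (card (perron_polys n R)) \<le> (\<Prod>k\<le>n. real (nat (2 * \<lfloor>B k\<rfloor> + 1)))"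
    by (metis of_nat_le_iff of_nat_prod)
  also have "\<dots> \<le> (\<Prod>k\<le>n. 3 * 2^n * R^(n-k))"
  proof (rule prod_mono)
    fix k assume k: "k \<in> {..n}"
    have b1: "1 \<le> real (n choose k)" using k by (simp add: Suc_leI)
    have r1: "1 \<le> R^(n-k)" using R by simp
    have B1: "1 \<le> B k" unfolding B_def using b1 r1 by (metis mult_mono' mult_1 zero_le_one)
    have B2: "B k \<le> 2^n * R^(n-k)" unfolding B_def
      using binomial_le_pow2[of n k] r1 by (intro mult_right_mono) (auto simp: numeral_2_eq_2 of_nat_le_iff[symmetric])
    have "real (nat (2 * \<lfloor>B k\<rfloor> + 1)) = 2 * real_of_int \<lfloor>B k\<rfloor> + 1" using B1 by auto
    also have "\<dots> \<le> 2 * B k + 1" by linarith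
    also have "\<dots> \<le> 3 * B k" using B1 by linarith
    finally show "0 \<le> real (nat (2 * \<lfloor>B k\<rfloor> + 1)) \<and> real (nat (2 * \<lfloor>B k\<rfloor> + 1)) \<le> 3 * 2^n * R^(n-k)"
      using B2 by auto
  qed
  also have "\<dots> = (3 * 2^n)^(n+1) * R ^ (\<Sum>k\<le>n. n - k)"
    by (simp add: prod.distrib power_sum)
  finally show ?thesis using finP by (simp add: sum_diff_gauss)
qed

lemma poly_split1:
  fixes Q :: "'a::comm_ring_1 poly"
  assumes "degree Q = m"
  shows "poly Q x = coeff Q m * x^m + (\<Sum>k<m. coeff Q k * x^k)"
  using assms by (simp add: poly_altdef lessThan_Suc_atMost[symmetric])

lemma poly_split2:
  fixes Q :: "'a::comm_ring_1 poly"
  assumes "degree Q = Suc m"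
  shows "poly Q x = coeff Q (Suc m) * x^(Suc m) + coeff Q m * x^m + (\<Sum>k<m. coeff Q k * x^k)"
  using assms by (simp add: poly_altdef lessThan_Suc_atMost[symmetric])

lemma rootbound:
  fixes Q :: "complex poly" and R eta :: real
  assumes dQ: "degree Q = m" and lQ: "coeff Q m = 1"
    and cb: "\<forall>k<m. cmod (coeff Q k) \<le> eta * R^(m-k)"
    and R: "R > 0" and eta: "eta \<ge> 0" and C: "real m * eta * 4^m < 1"
    and z: "poly Q z = 0"
  shows "cmod z < R / 4"
proof (rule ccontr)
  assume "\<not> cmod z < R / 4"
  then have zR: "R \<le> 4 * cmod z" by simp
  then have zpos: "cmod z > 0" using R by linarith
  have t: "cmod (coeff Q k * z^k) \<le> eta * 4^m * cmod z ^ m" if k: "k < m" for k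
  proof -
    have "cmod (coeff Q k * z^k) = cmod (coeff Q k) * cmod z ^ k" by (simp add: norm_mult norm_power)
    also have "\<dots> \<le> (eta * R^(m-k)) * cmod z ^ k"
      using cb k by (intro mult_right_mono) auto
    also have "R^(m-k) \<le> (4 * cmod z)^(m-k)" using zR R by (intro power_mono) auto
    then have "(eta * R^(m-k)) * cmod z ^ k \<le> (eta * (4 * cmod z)^(m-k)) * cmod z ^ k"
      using eta by (intro mult_right_mono mult_left_mono) auto
    also have "\<dots> = eta * 4^(m-k) * (cmod z^(m-k) * cmod z ^ k)" by (simp add: power_mult_distrib)
    also have "cmod z^(m-k) * cmod z ^ k = cmod z ^ m" using k by (simp add: power_add[symmetric])
    also have "eta * 4^(m-k) * cmod z ^ m \<le> eta * 4^m * cmod z ^ m"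
      using eta by (intro mult_right_mono mult_left_mono power_increasing) auto
    finally show ?thesis .
  qed
  have "cmod (\<Sum>k<m. coeff Q k * z^k) \<le> (\<Sum>k<m. cmod (coeff Q k * z^k))" by (rule norm_sum)
  also have "\<dots> \<le> (\<Sum>k<m. eta * 4^m * cmod z ^ m)" using t by (intro sum_mono) auto
  also have "\<dots> = (real m * eta * 4^m) * cmod z ^ m" by simp
  also have "\<dots> < cmod z ^ m" using C zpos by simp
  finally have lt: "cmod (\<Sum>k<m. coeff Q k * z^k) < cmod (z^m)" by (simp add: norm_power)
  have "0 = z^m + (\<Sum>k<m. coeff Q k * z^k)" using z poly_split1[OF dQ, of z] lQ by simp
  then have "z^m = - (\<Sum>k<m. coeff Q k * z^k)" by (simp add: eq_neg_iff_add_eq_0)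
  then show False using lt by simp
qed

lemma telescope:
  fixes Q :: "'a::comm_ring_1 poly"
  assumes "P = [:-c,1:] * Q"
  shows "(\<Sum>i\<le>k. coeff P i * c^i) = - coeff Q k * c^(Suc k)"
proof (induction k)
  case 0 then show ?case using assms by simp
next
  case (Suc k)
  have h: "coeff P (Suc k) = coeff Q k - c * coeff Q (Suc k)" using assms by simp
  have "(\<Sum>i\<le>Suc k. coeff P i * c^i) = (\<Sum>i\<le>k. coeff P i * c^i) + coeff P (Suc k) * c^(Suc k)"
    by simp
  also have "\<dots> = - coeff Q k * c^(Suc k) + (coeff Q k - c * coeff Q (Suc k)) * c^(Suc k)"
    by (simp only: Suc.IH h)
  also have "\<dots> = - coeff Q (Suc k) * c^(Suc (Suc k))" by (simp add: algebra_simps)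
  finally show ?case .
qed

lemma tail_real:
  fixes b :: "nat \<Rightarrow> real"
  assumes b: "\<forall>k<m. \<bar>b k\<bar> \<le> e * R^(Suc m - k)" and R: "R > 0" and x: "x \<ge> R/2" and e: "e \<ge> 0"
  shows "\<bar>\<Sum>k<m. b k * x^k\<bar> \<le> real m * e * 2^(Suc m) * R * x^m"
proof -
  have xp: "x > 0" using R x by linarith
  have t: "\<bar>b k * x^k\<bar> \<le> e * 2^(Suc m) * R * x^m" if k: "k < m" for k
  proof -
    have "\<bar>b k * x^k\<bar> = \<bar>b k\<bar> * x^k" using xp by (simp add: abs_mult)
    also have "\<dots> \<le> e * R^(Suc m - k) * x^k" using b k xp by (intro mult_right_mono) auto
    also have "R^(Suc m - k) = R * R^(m-k)" using k by (simp add: Suc_diff_le)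
    also have "R^(m-k) \<le> (2*x)^(m-k)" using R x by (intro power_mono) auto
    then have "e * (R * R^(m-k)) * x^k \<le> e * (R * (2*x)^(m-k)) * x^k"
      using e R xp by (intro mult_right_mono mult_left_mono) auto
    also have "\<dots> = e * R * 2^(m-k) * (x^(m-k) * x^k)" by (simp add: power_mult_distrib)
    also have "x^(m-k) * x^k = x^m" using k by (simp add: power_add[symmetric])
    also have "e * R * 2^(m-k) * x^m \<le> e * R * 2^(Suc m) * x^m"
      using e R xp by (intro mult_right_mono mult_left_mono power_increasing) auto
    finally show ?thesis by (simp add: algebra_simps)
  qed
  have "\<bar>\<Sum>k<m. b k * x^k\<bar> \<le> (\<Sum>k<m. \<bar>b k * x^k\<bar>)" by (rule sum_abs)
  also have "\<dots> \<le> (\<Sum>k<m. e * 2^(Suc m) * R * x^m)" using t by (intro sum_mono) auto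
  finally show ?thesis by (simp add: algebra_simps)
qed

lemma qcoeff:
  fixes Q P :: "complex poly" and l R e :: real
  assumes PQ: "P = [:-complex_of_real l,1:] * Q" and R: "R > 0" and l: "l \<ge> R/2" and e: "e \<ge> 0"
    and b: "\<forall>i<m. cmod (coeff P i) \<le> e * R^(Suc m - i)" and k: "k < m"
  shows "cmod (coeff Q k) \<le> real (Suc m) * e * 2^(Suc m) * R^(m-k)"
proof -
  have lp: "l > 0" using R l by linarith
  let ?c = "complex_of_real l"
  have "cmod (coeff Q k) * l^(Suc k) = cmod (- coeff Q k * ?c^(Suc k))"
    using lp by (simp add: norm_mult norm_power)
  also have "\<dots> = cmod (\<Sum>i\<le>k. coeff P i * ?c^i)" using telescope[OF PQ, of k] by simp
  also have "\<dots> \<le> (\<Sum>i\<le>k. cmod (coeff P i * ?c^i))" by (rule norm_sum)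
  also have "\<dots> \<le> (\<Sum>i\<le>k. e * 2^(Suc m) * R^(m-k) * l^(Suc k))"
  proof (rule sum_mono)
    fix i assume i: "i \<in> {..k}"
    have "cmod (coeff P i * ?c^i) = cmod (coeff P i) * l^i" using lp by (simp add: norm_mult norm_power)
    also have "\<dots> \<le> e * R^(Suc m - i) * l^i" using b i k lp by (intro mult_right_mono) auto
    also have "R^(Suc m - i) = R^(m-k) * R^(Suc k - i)" using i k by (simp add: power_add[symmetric])
    also have "R^(Suc k - i) \<le> (2*l)^(Suc k - i)" using R l by (intro power_mono) auto
    then have "e * (R^(m-k) * R^(Suc k - i)) * l^i \<le> e * (R^(m-k) * (2*l)^(Suc k - i)) * l^i"
      using e R lp by (intro mult_right_mono mult_left_mono) auto
    also have "\<dots> = e * R^(m-k) * 2^(Suc k - i) * (l^(Suc k - i) * l^i)" by (simp add: power_mult_distrib)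
    also have "l^(Suc k - i) * l^i = l^(Suc k)" using i by (simp add: power_add[symmetric])
    also have "e * R^(m-k) * 2^(Suc k - i) * l^(Suc k) \<le> e * R^(m-k) * 2^(Suc m) * l^(Suc k)"
      using e R lp k by (intro mult_right_mono mult_left_mono power_increasing) auto
    finally show "cmod (coeff P i * ?c^i) \<le> e * 2^(Suc m) * R^(m-k) * l^(Suc k)" by (simp add: algebra_simps)
  qed
  also have "\<dots> = real (Suc k) * (e * 2^(Suc m) * R^(m-k)) * l^(Suc k)" by simp
  also have "\<dots> \<le> real (Suc m) * (e * 2^(Suc m) * R^(m-k)) * l^(Suc k)"
    using k e R lp by (intro mult_right_mono mult_left_mono) auto
  finally have "cmod (coeff Q k) * l^(Suc k) \<le> (real (Suc m) * e * 2^(Suc m) * R^(m-k)) * l^(Suc k)"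
    by (simp add: algebra_simps)
  then show ?thesis using lp by (simp add: mult_le_cancel_right)
qed

lemma poly_of_int_of_real:
  "poly (map_poly (of_int::int\<Rightarrow>complex) p) (complex_of_real x) =
   complex_of_real (poly (map_poly (of_int::int\<Rightarrow>real) p) x)"
  by (simp add: poly_altdef of_real_sum)

lemma member:
  fixes p :: "int poly" and m :: nat and R e :: real
  assumes deg: "degree p = Suc m" and lc: "coeff p (Suc m) = 1"
    and M1: "5*R/8 \<le> - real_of_int (coeff p m)" and M2: "- real_of_int (coeff p m) \<le> 7*R/8"
    and small: "\<forall>k<m. \<bar>real_of_int (coeff p k)\<bar> \<le> e * R^(Suc m - k)"
    and R: "R \<ge> 16" and e: "e \<ge> 0"
    and C1: "real (Suc m) * e * 2^(Suc m) \<le> 1/32"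
    and C2: "real m * (real (Suc m) * e * 2^(Suc m)) * 4^m < 1"
  shows "p \<in> perron_polys (Suc m) R"
proof -
  define Pr where "Pr = map_poly (of_int::int\<Rightarrow>real) p"
  define Pc where "Pc = map_poly (of_int::int\<Rightarrow>complex) p"
  define M where "M = - real_of_int (coeff p m)"
  have dPr: "degree Pr = Suc m" and dPc: "degree Pc = Suc m" using deg by (auto simp: Pr_def Pc_def)
  have tail: "\<bar>\<Sum>k<m. real_of_int (coeff p k) * x^k\<bar> \<le> R * x^m / 32" if x: "x \<ge> R/2" for x
  proof -
    have xp: "x > 0" using x R by linarith
    have "\<bar>\<Sum>k<m. real_of_int (coeff p k) * x^k\<bar> \<le> real m * e * 2^(Suc m) * R * x^m"
      using tail_real[of m "\<lambda>k. real_of_int (coeff p k)" e R x] small R e x by auto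
    also have "\<dots> \<le> real (Suc m) * e * 2^(Suc m) * (R * x^m)"
      using e R xp by (simp add: mult_right_mono mult_left_mono)
    also have "\<dots> \<le> 1/32 * (R * x^m)" using C1 R xp by (intro mult_right_mono) auto
    finally show ?thesis by simp
  qed
  have form: "poly Pr x = x^m * (x - M) + (\<Sum>k<m. real_of_int (coeff p k) * x^k)" for x
    using poly_split2[OF dPr, of x] lc by (simp add: Pr_def M_def algebra_simps)
  define a where "a = M - R/16"
  define b where "b = M + R/16"
  have a2: "a \<ge> R/2" and b1: "b \<le> R" and ab: "a < b" using M1 M2 R by (auto simp: a_def b_def M_def)
  have ap: "a > 0" and bp: "b > 0" using a2 ab R by linarith+
  have "poly Pr a = a^m * (-R/16) + (\<Sum>k<m. real_of_int (coeff p k) * a^k)"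
    using form[of a] by (simp add: a_def)
  moreover have "(\<Sum>k<m. real_of_int (coeff p k) * a^k) \<le> R * a^m / 32"
    using tail[OF a2] abs_ge_self order_trans by blast
  ultimately have "poly Pr a \<le> a^m * (-R/16) + R * a^m / 32" by linarith
  also have "\<dots> < 0" using ap R by simp
  finally have pa: "poly Pr a < 0" .
  have "poly Pr b = b^m * (R/16) + (\<Sum>k<m. real_of_int (coeff p k) * b^k)"
    using form[of b] by (simp add: b_def)
  moreover have "- (\<Sum>k<m. real_of_int (coeff p k) * b^k) \<le> R * b^m / 32"
    using tail[of b] a2 ab abs_ge_minus_self order_trans by (metis less_eq_real_def order.trans)
  ultimately have "poly Pr b \<ge> b^m * (R/16) - R * b^m / 32" by linarith
  moreover have "b^m * (R/16) - R * b^m / 32 > 0" using bp R by simp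
  ultimately have pb: "poly Pr b > 0" by linarith
  obtain l where l: "a < l" "l < b" "poly Pr l = 0" using poly_IVT_pos[OF ab pa pb] by blast
  have l2: "l > R/2" and lR: "l < R" using l a2 b1 by linarith+
  have rootc: "poly Pc (complex_of_real l) = 0"
    using poly_of_int_of_real[of p l] l(3) by (simp add: Pc_def Pr_def)
  then obtain Q where PQ: "Pc = [:-complex_of_real l,1:] * Q" using poly_eq_0_iff_dvd by blast
  have Q0: "Q \<noteq> 0" using PQ dPc by auto
  have dm: "degree ([:-complex_of_real l,1:]*Q) = 1 + degree Q" by (subst degree_mult_eq) (use Q0 in auto)
  have dQ: "degree Q = m" using PQ dPc dm by simp
  have "lead_coeff ([:-complex_of_real l,1:]*Q) = lead_coeff Q" by (subst lead_coeff_mult) auto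
  moreover have "lead_coeff Pc = 1" using dPc lc by (simp add: Pc_def)
  ultimately have "lead_coeff Q = 1" using PQ by metis
  then have lQ: "coeff Q m = 1" using dQ by simp
  have bc: "\<forall>i<m. cmod (coeff Pc i) \<le> e * R^(Suc m - i)" using small by (simp add: Pc_def)
  have Rp: "R > 0" using R by simp
  have cQ: "\<forall>k<m. cmod (coeff Q k) \<le> (real (Suc m) * e * 2^(Suc m)) * R^(m-k)"
    using qcoeff[OF PQ Rp _ e bc] l2 by auto
  have eta: "real (Suc m) * e * 2^(Suc m) \<ge> 0" using e by simp
  have rQ: "cmod z < R/4" if "poly Q z = 0" for z
    using rootbound[OF dQ lQ cQ Rp eta C2 that] .
  have roots: "z = complex_of_real l \<or> cmod z < R/4" if "poly Pc z = 0" for z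
    using that PQ rQ by auto
  show ?thesis unfolding perron_polys_def mem_Collect_eq
  proof (intro conjI exI[of _ l] allI impI)
    show "degree p = Suc m" by (rule deg)
    show "lead_coeff p = 1" using deg lc by simp
    show "l > 1" using l2 R by linarith
    show "poly (map_poly of_int p) (complex_of_real l) = 0" using rootc by (simp add: Pc_def)
  next
    fix z :: complex assume "poly (map_poly of_int p) z = 0 \<and> z \<noteq> complex_of_real l"
    then show "cmod z < l" using roots[of z] l2 R by (auto simp: Pc_def)
  next
    fix z :: complex assume "poly (map_poly of_int p) z = 0"
    then show "cmod z \<le> R" using roots[of z] lR R l2 by (auto simp: Pc_def)
  qed
qed

lemma exp_lower: "1 + (\<Sum>k<m. Suc m - k) = Suc m * (Suc m + 1) div 2"
proof -
  have "(\<Sum>k\<le>Suc m. Suc m - k) = (\<Sum>k<m. Suc m - k) + 1"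
    by (simp add: lessThan_Suc_atMost[symmetric])
  then show ?thesis using sum_diff_gauss[of "Suc m"] by simp
qed

lemma lower:
  fixes m :: nat and R e :: real
  assumes R: "R \<ge> 16" and e: "e > 0"
    and C1: "real (Suc m) * e * 2^(Suc m) \<le> 1/32"
    and C2: "real m * (real (Suc m) * e * 2^(Suc m)) * 4^m < 1"
    and fin: "finite (perron_polys (Suc m) R)"
  shows "e^m / 8 * R ^ (Suc m * (Suc m + 1) div 2) \<le> real (card (perron_polys (Suc m) R))"
proof -
  define F where "F k = (if k < m then {0..\<lfloor>e*R^(Suc m - k)\<rfloor>}
      else if k = m then {-\<lfloor>7*R/8\<rfloor>..-\<lceil>5*R/8\<rceil>} else {1::int})" for k
  define T where "T = PiE {..Suc m} F"
  define g where "g f = (\<Sum>k\<le>Suc m. monom (f k) k)" for f :: "nat \<Rightarrow> int"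
  have cg: "coeff (g f) k = (if k \<le> Suc m then f k else 0)" for f k
    by (simp add: g_def coeff_sum coeff_monom)
  have dg: "degree (g f) = Suc m" if "f \<in> T" for f
  proof (rule antisym)
    show "degree (g f) \<le> Suc m" by (rule degree_le) (auto simp: cg)
    have "f (Suc m) \<in> F (Suc m)" using that by (auto simp: T_def PiE_iff)
    then have "coeff (g f) (Suc m) = 1" by (simp add: cg F_def)
    then show "Suc m \<le> degree (g f)" by (intro le_degree) simp
  qed
  have inj: "inj_on g T"
  proof
    fix f1 f2 assume f1: "f1 \<in> T" and f2: "f2 \<in> T" and eq: "g f1 = g f2"
    show "f1 = f2"
    proof (rule ext)
      fix k show "f1 k = f2 k"
      proof (cases "k \<le> Suc m")
        case True then show ?thesis using arg_cong[OF eq, of "\<lambda>p. coeff p k"] by (simp add: cg)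
      next
        case False then show ?thesis using f1 f2 by (auto simp: T_def PiE_iff extensional_def)
      qed
    qed
  qed
  have sub: "g ` T \<subseteq> perron_polys (Suc m) R"
  proof
    fix p assume "p \<in> g ` T"
    then obtain f where f: "f \<in> T" "p = g f" by auto
    have fk: "f k \<in> F k" if "k \<le> Suc m" for k using f(1) that by (auto simp: T_def PiE_iff)
    show "p \<in> perron_polys (Suc m) R"
    proof (rule member[of p m R e])
      show "degree p = Suc m" using dg f by simp
      show "coeff p (Suc m) = 1" using fk[of "Suc m"] f by (simp add: cg F_def)
      have fm: "-\<lfloor>7*R/8\<rfloor> \<le> f m \<and> f m \<le> -\<lceil>5*R/8\<rceil>" using fk[of m] by (simp add: F_def)
      have "real_of_int (- f m) \<ge> real_of_int \<lceil>5*R/8\<rceil>" using fm by linarith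
      then show "5*R/8 \<le> - real_of_int (coeff p m)" using f by (simp add: cg) linarith
      have "real_of_int (- f m) \<le> real_of_int \<lfloor>7*R/8\<rfloor>" using fm by linarith
      then show "- real_of_int (coeff p m) \<le> 7*R/8" using f by (simp add: cg) linarith
      show "\<forall>k<m. \<bar>real_of_int (coeff p k)\<bar> \<le> e * R^(Suc m - k)"
      proof (intro allI impI)
        fix k assume k: "k < m"
        have "0 \<le> f k \<and> f k \<le> \<lfloor>e*R^(Suc m - k)\<rfloor>" using fk[of k] k by (simp add: F_def)
        then show "\<bar>real_of_int (coeff p k)\<bar> \<le> e * R^(Suc m - k)" using f k
          by (simp add: cg) (metis le_floor_iff of_int_0_le_iff abs_of_nonneg)
      qed
    qed (use R e C1 C2 in auto)
  qed
  define G where "G k = (if k < m then e*R^(Suc m - k) else if k = m then R/8 else 1)" for k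
  have "(\<Prod>k\<le>Suc m. G k) \<le> (\<Prod>k\<le>Suc m. real (card (F k)))"
  proof (rule prod_mono)
    fix k assume k: "k \<in> {..Suc m}"
    show "0 \<le> G k \<and> G k \<le> real (card (F k))"
    proof (cases "k < m")
      case True
      have "e*R^(Suc m - k) \<ge> 0" using e R by simp
      moreover have "real (card (F k)) = real_of_int \<lfloor>e*R^(Suc m - k)\<rfloor> + 1"
        using True calculation by (simp add: F_def)
      ultimately show ?thesis using True by (simp add: G_def)
    next
      case False
      show ?thesis
      proof (cases "k = m")
        case True
        have c: "card (F k) = nat (\<lfloor>7*R/8\<rfloor> - \<lceil>5*R/8\<rceil> + 1)" using True by (simp add: F_def)
        have "real_of_int \<lfloor>7*R/8\<rfloor> - real_of_int \<lceil>5*R/8\<rceil> + 1 \<ge> R/8" using R by linarith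
        then show ?thesis using True False c R by (simp add: G_def)
      next
        case False2: False
        then have "k = Suc m" using k False by auto
        then show ?thesis using False False2 by (simp add: G_def F_def)
      qed
    qed
  qed
  also have "\<dots> = real (card T)" by (simp add: T_def card_PiE)
  also have "card T = card (g ` T)" using card_image[OF inj] by simp
  also have "real (card (g ` T)) \<le> real (card (perron_polys (Suc m) R))"
    using card_mono[OF fin sub] by simp
  finally have le: "(\<Prod>k\<le>Suc m. G k) \<le> real (card (perron_polys (Suc m) R))" .
  have "(\<Prod>k\<le>Suc m. G k) = (\<Prod>k<m. G k) * G m * G (Suc m)"
    by (simp add: lessThan_Suc_atMost[symmetric])
  also have "(\<Prod>k<m. G k) = (\<Prod>k<m. e * R^(Suc m - k))" by (rule prod.cong) (auto simp: G_def)
  also have "\<dots> = e^m * R^(\<Sum>k<m. Suc m - k)" by (simp add: prod.distrib power_sum)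
  finally have "(\<Prod>k\<le>Suc m. G k) = e^m / 8 * R^(1 + (\<Sum>k<m. Suc m - k))" by (simp add: G_def)
  then show ?thesis using le exp_lower[of m] by simp
qed

lemma consts_ok:
  fixes m :: nat
  defines "e \<equiv> 1 / (64 * 32^(Suc m)) :: real"
  shows "real (Suc m) * e * 2^(Suc m) \<le> 1/32"
    and "real m * (real (Suc m) * e * 2^(Suc m)) * 4^m < 1"
proof -
  have h: "real (Suc m) \<le> 2^(Suc m)"
    using less_exp[of "Suc m"] by (metis less_imp_le of_nat_le_iff of_nat_numeral of_nat_power)
  have h2: "real m \<le> 2^(Suc m)" using h by simp
  have ep: "e > 0" by (simp add: e_def)
  have "real (Suc m) * 2^(Suc m) \<le> 2^(Suc m) * 2^(Suc m)" using h by (intro mult_right_mono) auto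
  also have "\<dots> = (2*2::real)^(Suc m)" by (simp only: power_mult_distrib)
  also have "\<dots> \<le> (32::real)^(Suc m)" by (intro power_mono) auto
  finally have a: "real (Suc m) * 2^(Suc m) \<le> (32::real)^(Suc m)" .
  have "real (Suc m) * e * 2^(Suc m) = (real (Suc m) * 2^(Suc m)) * e" by simp
  also have "\<dots> \<le> 32^(Suc m) * e" using a ep by (intro mult_right_mono) auto
  also have "\<dots> = 1/64" by (simp add: e_def)
  finally show "real (Suc m) * e * 2^(Suc m) \<le> 1/32" by simp
  have "real m * real (Suc m) * 2^(Suc m) * 4^m \<le> 2^(Suc m) * 2^(Suc m) * 2^(Suc m) * 4^(Suc m)"
    using h h2 by (intro mult_mono power_increasing) auto
  also have "\<dots> = (2*2*2*4::real)^(Suc m)" by (simp only: power_mult_distrib)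
  also have "\<dots> = (32::real)^(Suc m)" by simp
  finally have b: "real m * real (Suc m) * 2^(Suc m) * 4^m \<le> (32::real)^(Suc m)" .
  have "real m * (real (Suc m) * e * 2^(Suc m)) * 4^m = (real m * real (Suc m) * 2^(Suc m) * 4^m) * e"
    by simp
  also have "\<dots> \<le> 32^(Suc m) * e" using b ep by (intro mult_right_mono) auto
  also have "\<dots> = 1/64" by (simp add: e_def)
  finally show "real m * (real (Suc m) * e * 2^(Suc m)) * 4^m < 1" by simp
qed

theorem lemma6:
  fixes n :: nat
  assumes "n \<ge> 1"
  shows "\<exists>C>0. \<forall>\<^sub>F R in at_top.
           (1 / C) * R ^ (n * (n + 1) div 2) \<le> real (card (perron_polys n R)) \<and>
           real (card (perron_polys n R)) \<le> C * R ^ (n * (n + 1) div 2)"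
proof -
  obtain m where n: "n = Suc m" using assms by (cases n) auto
  define e :: real where "e = 1 / (64 * 32^(Suc m))"
  have ep: "e > 0" by (simp add: e_def)
  note cs = consts_ok[of m, folded e_def]
  define Cu :: real where "Cu = (3 * 2^n)^(n+1)"
  define C where "C = max Cu (8 / e^m)"
  have Cp: "C > 0" using ep by (simp add: C_def Cu_def less_max_iff_disj)
  have ev: "\<forall>\<^sub>F R in at_top. (R::real) \<ge> 16" by (rule eventually_ge_at_top)
  show ?thesis
  proof (intro exI[of _ C] conjI Cp eventually_mono[OF ev] impI)
    fix R :: real assume R: "R \<ge> 16"
    have up: "finite (perron_polys n R)" "real (card (perron_polys n R)) \<le> Cu * R ^ (n * (n + 1) div 2)"
      using upper[of R n] R by (auto simp: Cu_def)
    have Rp: "R ^ (n * (n + 1) div 2) \<ge> 0" using R by simp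
    show "real (card (perron_polys n R)) \<le> C * R ^ (n * (n + 1) div 2)"
      using up(2) mult_right_mono[OF max.cobounded1[of Cu "8/e^m"] Rp] by (simp add: C_def)
    have lo: "e^m / 8 * R ^ (n * (n + 1) div 2) \<le> real (card (perron_polys n R))"
      using lower[OF R ep cs] up(1) n by simp
    have "1 / C \<le> e^m / 8"
    proof -
      have "8 / e^m \<le> C" by (simp add: C_def)
      moreover have "0 < 8 / e^m" using ep by simp
      ultimately have "1 / C \<le> 1 / (8 / e^m)" using Cp by (intro divide_left_mono) auto
      then show ?thesis by simp
    qed
    then show "1 / C * R ^ (n * (n + 1) div 2) \<le> real (card (perron_polys n R))"
      using lo mult_right_mono[OF _ Rp] by (meson order_trans)
  qed
qed

end
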